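(* Consider $N$ advertisers with click-through rates $c_i\in(0,1]$, abandonment probabilities $\gamma_i\ge0$, $\mu_i=c_i+\gamma_i\le 1$, and a fixed bid vector $(b_1,\dots,b_N)$, indexed in descending order of $\frac{b_ic_i}{\mu_i}$. Both the CE mechanism and the VCG mechanism rank the ads in this order. In the CE mechanism the ad at position $i$ pays per click $p_i^{CE}=\frac{b_{i+1}c_{i+1}\mu_i}{\mu_{i+1}c_i}$ (with $b_{N+1}=0$); in the VCG mechanism it pays per click $$p_i^{V}=\frac{\mu_i}{c_i}\sum_{j=i+1}^{N}b_jc_j\prod_{k=i+1}^{j-1}(1-\mu_k).$$ Then the search engine's expected revenue $\sum_{i=1}^N p_i\,c_i\prod_{l<i}(1-\mu_l)$ under the CE mechanism is greater than or equal to that under the VCG mechanism.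
   Context: Click model: users view ads top to bottom; having viewed the ad at position $i$ the user clicks it with probability $c_i$, abandons with probability $\gamma_i$, and otherwise moves on, so the ad at position $i$ is clicked with probability $c_i\prod_{l<i}(1-\mu_l)$. The VCG price above is the per-click version of the expected loss in value (measured by bids) that the ad at position $i$ imposes on the ads below it. *)

theory Defs
  imports Complex_Main
begin

text \<open>Advertisers are indexed 1..N (position i = advertiser i after sorting).
  mu i = c i + gamma i is passed as the function mu.\<close>

definition ce_price :: "nat \<Rightarrow> (nat \<Rightarrow> real) \<Rightarrow> (nat \<Rightarrow> real) \<Rightarrow> (nat \<Rightarrow> real) \<Rightarrow> nat \<Rightarrow> real" where
  "ce_price N b c mu i =
     (if i < N then b (i+1) * c (i+1) * mu i / (mu (i+1) * c i) else 0)"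

definition vcg_price :: "nat \<Rightarrow> (nat \<Rightarrow> real) \<Rightarrow> (nat \<Rightarrow> real) \<Rightarrow> (nat \<Rightarrow> real) \<Rightarrow> nat \<Rightarrow> real" where
  "vcg_price N b c mu i =
     mu i / c i * (\<Sum>j\<in>{i+1..N}. b j * c j * (\<Prod>k\<in>{i+1..<j}. (1 - mu k)))"

definition revenue :: "nat \<Rightarrow> (nat \<Rightarrow> real) \<Rightarrow> (nat \<Rightarrow> real) \<Rightarrow> (nat \<Rightarrow> real) \<Rightarrow> real" where
  "revenue N p c mu = (\<Sum>i\<in>{1..N}. p i * c i * (\<Prod>l\<in>{1..<i}. (1 - mu l)))"

end

theory Submission
  imports Defs
begin

lemma telesc:
  fixes x m :: "nat \<Rightarrow> real"
  assumes "\<forall>j\<in>{a..n}. 0 \<le> x j \<and> x j \<le> X \<and> 0 \<le> m j \<and> m j \<le> 1"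
  shows "(\<Sum>j\<in>{a..n}. x j * m j * (\<Prod>k\<in>{a..<j}. (1 - m k)))
         \<le> X * (1 - (\<Prod>k\<in>{a..n}. (1 - m k)))"
  using assms
proof (induction n)
  case 0
  then show ?case
    by (cases "a = 0") (auto simp: mult_right_mono)
next
  case (Suc n)
  show ?case
  proof (cases "a \<le> Suc n")
    case False
    then show ?thesis by simp
  next
    case True
    have IH: "(\<Sum>j\<in>{a..n}. x j * m j * (\<Prod>k\<in>{a..<j}. (1 - m k)))
         \<le> X * (1 - (\<Prod>k\<in>{a..n}. (1 - m k)))"
      using Suc by auto
    have S: "{a..Suc n} = insert (Suc n) {a..n}" using True by auto
    have L: "{a..<Suc n} = {a..n}" by auto
    have h: "0 \<le> x (Suc n) \<and> x (Suc n) \<le> X \<and> 0 \<le> m (Suc n) \<and> m (Suc n) \<le> 1"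
      using Suc.prems True by auto
    define P where "P = (\<Prod>k\<in>{a..n}. (1 - m k))"
    have P0: "0 \<le> P" unfolding P_def using Suc.prems by (intro prod_nonneg) auto
    have "x (Suc n) * m (Suc n) * P \<le> X * m (Suc n) * P"
      using h P0 by (intro mult_right_mono) auto
    then show ?thesis using IH
      by (simp add: S L P_def[symmetric] algebra_simps)
  qed
qed

theorem theorem4:
  fixes N :: nat and b c gamma mu :: "nat \<Rightarrow> real"
  assumes c_pos: "\<And>i. i \<in> {1..N} \<Longrightarrow> 0 < c i \<and> c i \<le> 1"
    and gamma_nn: "\<And>i. i \<in> {1..N} \<Longrightarrow> 0 \<le> gamma i"
    and mu_def: "\<And>i. i \<in> {1..N} \<Longrightarrow> mu i = c i + gamma i"
    and mu_le: "\<And>i. i \<in> {1..N} \<Longrightarrow> mu i \<le> 1"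
    and b_nn: "\<And>i. i \<in> {1..N} \<Longrightarrow> 0 \<le> b i"
    and sorted: "\<And>i j. i \<in> {1..N} \<Longrightarrow> j \<in> {1..N} \<Longrightarrow> i \<le> j \<Longrightarrow>
                   b j * c j / mu j \<le> b i * c i / mu i"
  shows "revenue N (vcg_price N b c mu) c mu \<le> revenue N (ce_price N b c mu) c mu"
  unfolding revenue_def
proof (rule sum_mono)
  fix i assume i: "i \<in> {1..N}"
  have mupos: "\<And>j. j \<in> {1..N} \<Longrightarrow> 0 < mu j"
    using c_pos gamma_nn mu_def by (metis add_pos_nonneg)
  define P where "P = (\<Prod>l\<in>{1..<i}. (1 - mu l))"
  have P0: "0 \<le> P" unfolding P_def using mu_le i by (intro prod_nonneg) auto
  have ci: "0 < c i" using c_pos i by auto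
  define x where "x j = b j * c j / mu j" for j
  show "vcg_price N b c mu i * c i * P \<le> ce_price N b c mu i * c i * P"
  proof (cases "i < N")
    case False
    then have "{i+1..N} = {}" by auto
    then show ?thesis using False by (simp add: vcg_price_def ce_price_def)
  next
    case True
    have i1: "i+1 \<in> {1..N}" using True by auto
    have eq: "(\<Sum>j\<in>{i+1..N}. b j * c j * (\<Prod>k\<in>{i+1..<j}. (1 - mu k)))
       = (\<Sum>j\<in>{i+1..N}. x j * mu j * (\<Prod>k\<in>{i+1..<j}. (1 - mu k)))"
    proof (rule sum.cong)
      fix j assume "j \<in> {i+1..N}"
      then have "j \<in> {1..N}" by auto
      then have "mu j \<noteq> 0" using mupos by force
      then show "b j * c j * (\<Prod>k\<in>{i+1..<j}. (1 - mu k)) = x j * mu j * (\<Prod>k\<in>{i+1..<j}. (1 - mu k))"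
        by (simp add: x_def)
    qed simp
    have ass: "\<forall>j\<in>{i+1..N}. 0 \<le> x j \<and> x j \<le> x (i+1) \<and> 0 \<le> mu j \<and> mu j \<le> 1"
    proof
      fix j assume j: "j \<in> {i+1..N}"
      then have j1: "j \<in> {1..N}" by auto
      show "0 \<le> x j \<and> x j \<le> x (i+1) \<and> 0 \<le> mu j \<and> mu j \<le> 1"
        using b_nn[OF j1] c_pos[OF j1] mupos[OF j1] mu_le[OF j1] sorted[OF i1 j1] j
        by (auto simp: x_def)
    qed
    have Q0: "0 \<le> (\<Prod>k\<in>{i+1..N}. (1 - mu k))" using mu_le i by (intro prod_nonneg) auto
    have x0: "0 \<le> x (i+1)" using ass i1 by auto
    have S: "(\<Sum>j\<in>{i+1..N}. b j * c j * (\<Prod>k\<in>{i+1..<j}. (1 - mu k))) \<le> x (i+1)"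
    proof -
      have "x (i+1) * (1 - (\<Prod>k\<in>{i+1..N}. (1 - mu k))) \<le> x (i+1)"
        using Q0 x0 by (simp add: mult_nonneg_nonneg right_diff_distrib)
      then show ?thesis using telesc[OF ass] eq by linarith
    qed
    have mui: "0 \<le> mu i" using mupos i by force
    have "vcg_price N b c mu i * c i * P = mu i * P * (\<Sum>j\<in>{i+1..N}. b j * c j * (\<Prod>k\<in>{i+1..<j}. (1 - mu k)))"
      using ci by (simp add: vcg_price_def)
    also have "\<dots> \<le> mu i * P * x (i+1)"
      using S mui P0 by (intro mult_left_mono) auto
    also have "\<dots> = ce_price N b c mu i * c i * P"
      using ci True by (simp add: ce_price_def x_def)
    finally show ?thesis .
  qed
qed

end
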